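(* Let $\Lambda$ be a finite set of multicompositions of $n$ with $\omega\in\Lambda$ and $\Lambda^+\subseteq\Lambda$. Then $$\mathscr S(\Lambda)\cong\operatorname{End}_{\mathscr H}\Big(\bigoplus_{\lambda\in\Lambda}M^\lambda\Big)\quad\text{and}\quad\mathscr H\cong\operatorname{End}_{\mathscr S(\Lambda)}\Big(\bigoplus_{\lambda\in\Lambda}M^\lambda\Big),$$ where $\bigoplus_{\lambda\in\Lambda}M^\lambda$ is regarded as an $(\mathscr S(\Lambda),\mathscr H)$-bimodule.
   Context: $R$ is an integral domain and $\mathscr H$ is the Ariki–Koike algebra over $R$ with parameters $q$ (invertible), $Q_1,\dots,Q_r$. For a multicomposition $\mu$, $M^\mu=m_\mu\mathscr H$, where $m_\mu=x_\mu u^+_\mu$, $x_\mu=\sum_{w\in\mathfrak S_\mu}T_w$ and $u^+_\mu=\prod_{s=2}^r\prod_{k=1}^{|\mu^{(1)}|+\dots+|\mu^{(s-1)}|}(L_k-Q_s)$, $L_k=q^{1-k}T_{k-1}\cdots T_1T_0T_1\cdots T_{k-1}$. The cyclotomic $q$-Schur algebra is $\mathscr S(\Lambda)=\operatorname{End}_{\mathscr H}(\bigoplus_{\mu\in\Lambda}M^\mu)$, acting on the left of $\bigoplus_\mu M^\mu$; $\Lambda^+$ is the set of multipartitions of $n$ dominating some element of $\Lambda$ in the dominance order; $\omega=((0),\dots,(0),(1^n))$, so $M^\omega=\mathscr H$. *)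

theory Defs
  imports "HOL-Algebra.QuotRing" "HOL-Library.FuncSet"
begin

text \<open>Elements: finitely supported functions from words (lists of generator indices
  below n) to R.  Multiplication is concatenation-convolution.\<close>

definition fa_carrier :: "nat \<Rightarrow> (nat list \<Rightarrow> 'r::idom) set" where
  "fa_carrier n = {f. finite {w. f w \<noteq> 0} \<and> (\<forall>w. f w \<noteq> 0 \<longrightarrow> set w \<subseteq> {..<n})}"

definition fa_mult :: "(nat list \<Rightarrow> 'r::idom) \<Rightarrow> (nat list \<Rightarrow> 'r) \<Rightarrow> nat list \<Rightarrow> 'r" where
  "fa_mult f g = (\<lambda>w. \<Sum>k\<in>{0..length w}. f (take k w) * g (drop k w))"

definition fa_add :: "(nat list \<Rightarrow> 'r::idom) \<Rightarrow> (nat list \<Rightarrow> 'r) \<Rightarrow> nat list \<Rightarrow> 'r" where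
  "fa_add f g = (\<lambda>w. f w + g w)"

definition fa_const :: "'r::idom \<Rightarrow> nat list \<Rightarrow> 'r" where
  "fa_const c = (\<lambda>w. if w = [] then c else 0)"

definition fa_gen :: "nat \<Rightarrow> nat list \<Rightarrow> 'r::idom" where
  "fa_gen i = (\<lambda>w. if w = [i] then 1 else 0)"

definition fa_minus :: "(nat list \<Rightarrow> 'r::idom) \<Rightarrow> (nat list \<Rightarrow> 'r) \<Rightarrow> nat list \<Rightarrow> 'r" where
  "fa_minus f g = (\<lambda>w. f w - g w)"

definition FA :: "nat \<Rightarrow> (nat list \<Rightarrow> 'r::idom) ring" where
  "FA n = \<lparr>carrier = fa_carrier n, mult = fa_mult, one = fa_const 1,
           zero = (\<lambda>_. 0), add = fa_add\<rparr>"

text \<open>Relations (parameters q, Q_1..Q_r):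
  (T_0 - Q_1)...(T_0 - Q_r) = 0;  (T_i - q)(T_i + 1) = 0 for 1 <= i < n;
  T_0 T_1 T_0 T_1 = T_1 T_0 T_1 T_0;  T_i T_(i+1) T_i = T_(i+1) T_i T_(i+1) for 1 <= i <= n-2;
  T_i T_j = T_j T_i for |i - j| > 1.\<close>

definition fa_prod_list :: "(nat list \<Rightarrow> 'r::idom) list \<Rightarrow> nat list \<Rightarrow> 'r" where
  "fa_prod_list xs = foldr fa_mult xs (fa_const 1)"

definition AK_rels :: "nat \<Rightarrow> nat \<Rightarrow> 'r::idom \<Rightarrow> (nat \<Rightarrow> 'r) \<Rightarrow> (nat list \<Rightarrow> 'r) set" where
  "AK_rels n r q Q =
     {fa_prod_list [fa_minus (fa_gen 0) (fa_const (Q s)). s \<leftarrow> [1..<r+1]] | _::unit. 1 \<le> n}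
   \<union> {fa_mult (fa_minus (fa_gen i) (fa_const q)) (fa_add (fa_gen i) (fa_const 1)) | i. 1 \<le> i \<and> i < n}
   \<union> {fa_minus (fa_prod_list [fa_gen 0, fa_gen 1, fa_gen 0, fa_gen 1])
                (fa_prod_list [fa_gen 1, fa_gen 0, fa_gen 1, fa_gen 0]) | _::unit. 2 \<le> n}
   \<union> {fa_minus (fa_prod_list [fa_gen i, fa_gen (i+1), fa_gen i])
                (fa_prod_list [fa_gen (i+1), fa_gen i, fa_gen (i+1)]) | i. 1 \<le> i \<and> i + 1 < n}
   \<union> {fa_minus (fa_mult (fa_gen i) (fa_gen j)) (fa_mult (fa_gen j) (fa_gen i)) | i j.
          i < n \<and> j < n \<and> i + 1 < j}"

definition AK :: "nat \<Rightarrow> nat \<Rightarrow> 'r::idom \<Rightarrow> (nat \<Rightarrow> 'r) \<Rightarrow> (nat list \<Rightarrow> 'r) set ring" where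
  "AK n r q Q = FA n Quot (Idl\<^bsub>FA n\<^esub> (AK_rels n r q Q))"

definition AK_T :: "nat \<Rightarrow> nat \<Rightarrow> 'r::idom \<Rightarrow> (nat \<Rightarrow> 'r) \<Rightarrow> nat \<Rightarrow> (nat list \<Rightarrow> 'r) set" where
  "AK_T n r q Q i = (Idl\<^bsub>FA n\<^esub> (AK_rels n r q Q)) +>\<^bsub>FA n\<^esub> (fa_gen i)"

definition AK_sc :: "nat \<Rightarrow> nat \<Rightarrow> 'r::idom \<Rightarrow> (nat \<Rightarrow> 'r) \<Rightarrow> 'r \<Rightarrow> (nat list \<Rightarrow> 'r) set" where
  "AK_sc n r q Q c = (Idl\<^bsub>FA n\<^esub> (AK_rels n r q Q)) +>\<^bsub>FA n\<^esub> (fa_const c)"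

definition AK_prod :: "nat \<Rightarrow> nat \<Rightarrow> 'r::idom \<Rightarrow> (nat \<Rightarrow> 'r) \<Rightarrow> (nat list \<Rightarrow> 'r) set list
                        \<Rightarrow> (nat list \<Rightarrow> 'r) set" where
  "AK_prod n r q Q xs = foldr (\<lambda>a b. a \<otimes>\<^bsub>AK n r q Q\<^esub> b) xs \<one>\<^bsub>AK n r q Q\<^esub>"

definition qinv :: "'r::idom \<Rightarrow> 'r" where
  "qinv q = (SOME x. q * x = 1)"

definition AK_L :: "nat \<Rightarrow> nat \<Rightarrow> 'r::idom \<Rightarrow> (nat \<Rightarrow> 'r) \<Rightarrow> nat \<Rightarrow> (nat list \<Rightarrow> 'r) set" where
  "AK_L n r q Q k = AK_prod n r q Q
     ([AK_sc n r q Q (qinv q ^ (k - 1))]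
      @ map (AK_T n r q Q) (rev [1..<k]) @ [AK_T n r q Q 0] @ map (AK_T n r q Q) [1..<k])"

definition stp :: "nat \<Rightarrow> nat \<Rightarrow> nat" where
  "stp i = (\<lambda>x. if x = i then i + 1 else if x = i + 1 then i else x)"

definition perm_of_word :: "nat list \<Rightarrow> nat \<Rightarrow> nat" where
  "perm_of_word ws = foldr (\<lambda>i p. stp i \<circ> p) ws id"

definition reduced_word :: "nat \<Rightarrow> (nat \<Rightarrow> nat) \<Rightarrow> nat list \<Rightarrow> bool" where
  "reduced_word n w ws \<longleftrightarrow> set ws \<subseteq> {1..<n} \<and> perm_of_word ws = w \<and>
     (\<forall>ws'. set ws' \<subseteq> {1..<n} \<and> perm_of_word ws' = w \<longrightarrow> length ws \<le> length ws')"

definition AK_Tw :: "nat \<Rightarrow> nat \<Rightarrow> 'r::idom \<Rightarrow> (nat \<Rightarrow> 'r) \<Rightarrow> (nat \<Rightarrow> nat) \<Rightarrow> (nat list \<Rightarrow> 'r) set" where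
  "AK_Tw n r q Q w = AK_prod n r q Q (map (AK_T n r q Q) (SOME ws. reduced_word n w ws))"

text \<open>A multicomposition mu = (mu^(1),...,mu^(r)) is encoded as mu :: nat => nat => nat,
  where mu s i is the (i+1)-th part of the component mu^(s+1) (s < r, i >= 0);
  components are sequences of nonnegative integers with finitely many nonzero terms
  (trailing zeros are immaterial).\<close>

definition csize :: "(nat \<Rightarrow> nat \<Rightarrow> nat) \<Rightarrow> nat \<Rightarrow> nat" where
  "csize mu s = (\<Sum>i\<in>{i. mu s i \<noteq> 0}. mu s i)"

definition multicomp :: "nat \<Rightarrow> nat \<Rightarrow> (nat \<Rightarrow> nat \<Rightarrow> nat) \<Rightarrow> bool" where
  "multicomp r n mu \<longleftrightarrow> (\<forall>s i. r \<le> s \<longrightarrow> mu s i = 0) \<and>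
     (\<forall>s. finite {i. mu s i \<noteq> 0}) \<and> (\<Sum>s<r. csize mu s) = n"

definition multipart :: "nat \<Rightarrow> nat \<Rightarrow> (nat \<Rightarrow> nat \<Rightarrow> nat) \<Rightarrow> bool" where
  "multipart r n mu \<longleftrightarrow> multicomp r n mu \<and> (\<forall>s i. mu s (Suc i) \<le> mu s i)"

definition dominates :: "nat \<Rightarrow> (nat \<Rightarrow> nat \<Rightarrow> nat) \<Rightarrow> (nat \<Rightarrow> nat \<Rightarrow> nat) \<Rightarrow> bool" where
  "dominates r lam mu \<longleftrightarrow> (\<forall>s<r. \<forall>j.
     (\<Sum>t<s. csize mu t) + (\<Sum>i\<le>j. mu s i) \<le> (\<Sum>t<s. csize lam t) + (\<Sum>i\<le>j. lam s i))"

definition Lambda_plus :: "nat \<Rightarrow> nat \<Rightarrow> (nat \<Rightarrow> nat \<Rightarrow> nat) set \<Rightarrow> (nat \<Rightarrow> nat \<Rightarrow> nat) set" where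
  "Lambda_plus r n Lam = {lam. multipart r n lam \<and> (\<exists>mu\<in>Lam. dominates r lam mu)}"

text \<open>omega = ((0),...,(0),(1^n)).\<close>
definition omega :: "nat \<Rightarrow> nat \<Rightarrow> nat \<Rightarrow> nat \<Rightarrow> nat" where
  "omega r n = (\<lambda>s i. if s + 1 = r \<and> i < n then 1 else 0)"

text \<open>Young subgroup S_mu: the rows of mu, read in the order mu^(1)_1, mu^(1)_2, ...,
  mu^(2)_1, ..., occupy consecutive blocks of {1..n}; S_mu is the stabiliser of all blocks.\<close>
definition row_block :: "(nat \<Rightarrow> nat \<Rightarrow> nat) \<Rightarrow> nat \<Rightarrow> nat \<Rightarrow> nat set" where
  "row_block mu s i = (let b = (\<Sum>t<s. csize mu t) + (\<Sum>j<i. mu s j) in {b + 1 .. b + mu s i})"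

definition young_subgroup :: "nat \<Rightarrow> nat \<Rightarrow> (nat \<Rightarrow> nat \<Rightarrow> nat) \<Rightarrow> (nat \<Rightarrow> nat) set" where
  "young_subgroup r n mu = {w. bij_betw w {1..n} {1..n} \<and> (\<forall>x. x \<notin> {1..n} \<longrightarrow> w x = x) \<and>
      (\<forall>s<r. \<forall>i. w ` row_block mu s i = row_block mu s i)}"

definition AK_x :: "nat \<Rightarrow> nat \<Rightarrow> 'r::idom \<Rightarrow> (nat \<Rightarrow> 'r) \<Rightarrow> (nat \<Rightarrow> nat \<Rightarrow> nat) \<Rightarrow> (nat list \<Rightarrow> 'r) set" where
  "AK_x n r q Q mu = finsum (AK n r q Q) (AK_Tw n r q Q) (young_subgroup r n mu)"

definition AK_u :: "nat \<Rightarrow> nat \<Rightarrow> 'r::idom \<Rightarrow> (nat \<Rightarrow> 'r) \<Rightarrow> (nat \<Rightarrow> nat \<Rightarrow> nat) \<Rightarrow> (nat list \<Rightarrow> 'r) set" where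
  "AK_u n r q Q mu = AK_prod n r q Q
     [AK_L n r q Q k \<ominus>\<^bsub>AK n r q Q\<^esub> AK_sc n r q Q (Q s).
        s \<leftarrow> [2..<r+1], k \<leftarrow> [1..<(\<Sum>t<s-1. csize mu t) + 1]]"

definition AK_m :: "nat \<Rightarrow> nat \<Rightarrow> 'r::idom \<Rightarrow> (nat \<Rightarrow> 'r) \<Rightarrow> (nat \<Rightarrow> nat \<Rightarrow> nat) \<Rightarrow> (nat list \<Rightarrow> 'r) set" where
  "AK_m n r q Q mu = AK_x n r q Q mu \<otimes>\<^bsub>AK n r q Q\<^esub> AK_u n r q Q mu"

definition Mperm :: "nat \<Rightarrow> nat \<Rightarrow> 'r::idom \<Rightarrow> (nat \<Rightarrow> 'r) \<Rightarrow> (nat \<Rightarrow> nat \<Rightarrow> nat) \<Rightarrow> (nat list \<Rightarrow> 'r) set set" where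
  "Mperm n r q Q mu = (\<lambda>h. AK_m n r q Q mu \<otimes>\<^bsub>AK n r q Q\<^esub> h) ` carrier (AK n r q Q)"

definition Msum :: "nat \<Rightarrow> nat \<Rightarrow> 'r::idom \<Rightarrow> (nat \<Rightarrow> 'r) \<Rightarrow> (nat \<Rightarrow> nat \<Rightarrow> nat) set
                    \<Rightarrow> ((nat \<Rightarrow> nat \<Rightarrow> nat) \<Rightarrow> (nat list \<Rightarrow> 'r) set) set" where
  "Msum n r q Q Lam = (\<Pi>\<^sub>E mu\<in>Lam. Mperm n r q Q mu)"

definition Msum_add where
  "Msum_add n r q Q Lam x y = (\<lambda>mu\<in>Lam. x mu \<oplus>\<^bsub>AK n r q Q\<^esub> y mu)"

definition Msum_act where
  "Msum_act n r q Q Lam x h = (\<lambda>mu\<in>Lam. x mu \<otimes>\<^bsub>AK n r q Q\<^esub> h)"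

text \<open>Cyclotomic q-Schur algebra S(Lam) = End_H(direct sum of M^mu), acting on the left.\<close>
definition Schur where
  "Schur n r q Q Lam = {phi. phi \<in> extensional (Msum n r q Q Lam) \<and>
      phi \<in> Msum n r q Q Lam \<rightarrow> Msum n r q Q Lam \<and>
      (\<forall>x\<in>Msum n r q Q Lam. \<forall>y\<in>Msum n r q Q Lam.
          phi (Msum_add n r q Q Lam x y) = Msum_add n r q Q Lam (phi x) (phi y)) \<and>
      (\<forall>x\<in>Msum n r q Q Lam. \<forall>h\<in>carrier (AK n r q Q).
          phi (Msum_act n r q Q Lam x h) = Msum_act n r q Q Lam (phi x) h)}"

definition End_Schur where
  "End_Schur n r q Q Lam = {psi. psi \<in> extensional (Msum n r q Q Lam) \<and>
      psi \<in> Msum n r q Q Lam \<rightarrow> Msum n r q Q Lam \<and>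
      (\<forall>x\<in>Msum n r q Q Lam. \<forall>y\<in>Msum n r q Q Lam.
          psi (Msum_add n r q Q Lam x y) = Msum_add n r q Q Lam (psi x) (psi y)) \<and>
      (\<forall>phi\<in>Schur n r q Q Lam. \<forall>x\<in>Msum n r q Q Lam. psi (phi x) = phi (psi x))}"

definition nat_map where
  "nat_map n r q Q Lam h = (\<lambda>x\<in>Msum n r q Q Lam. Msum_act n r q Q Lam x h)"

end

theory Submission
  imports Defs "HOL-Combinatorics.Permutations"
begin


lemma fa_mult_assoc: "fa_mult (fa_mult f g) h = fa_mult f (fa_mult g h)"
proof
  fix w :: "nat list"
  define L where "L = length w"
  define F where "F = (\<lambda>i j. f (take i w) * g (take j (drop i w)) * h (drop (i+j) w))"
  have "fa_mult (fa_mult f g) h w = (\<Sum>k\<in>{0..L}. (\<Sum>i\<in>{0..k}. f (take i (take k w)) * g (drop i (take k w))) * h (drop k w))"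
    unfolding fa_mult_def L_def by (rule sum.cong) (auto intro!: sum.cong)
  also have "\<dots> = (\<Sum>k\<le>L. \<Sum>i\<le>k. F i (k - i))"
    by (auto simp: F_def sum_distrib_right drop_take atLeast0AtMost intro!: sum.cong)
  also have "\<dots> = (\<Sum>(i,j)\<in>{(i,j). i+j \<le> L}. F i j)"
    by (rule sum.triangle_reindex_eq[symmetric])
  also have "\<dots> = (\<Sum>i\<le>L. \<Sum>j\<le>L-i. F i j)"
  proof -
    have "{(i,j). i+j \<le> L} = Sigma {..L} (\<lambda>i. {..L-i})" by auto
    then show ?thesis by (simp add: sum.Sigma)
  qed
  also have "\<dots> = fa_mult f (fa_mult g h) w"
    by (auto simp: fa_mult_def F_def L_def sum_distrib_left atLeast0AtMost mult.assoc add.commute intro!: sum.cong)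
  finally show "fa_mult (fa_mult f g) h w = fa_mult f (fa_mult g h) w" .
qed

lemma fa_mult_one_l: "fa_mult (fa_const 1) f = f"
proof
  fix w :: "nat list"
  have "fa_mult (fa_const 1) f w = (\<Sum>k\<in>{0..length w}. (if k = 0 then f w else 0))"
    unfolding fa_mult_def fa_const_def by (rule sum.cong) auto
  then show "fa_mult (fa_const 1) f w = f w" by simp
qed

lemma fa_mult_one_r: "fa_mult f (fa_const 1) = f"
proof
  fix w :: "nat list"
  have "fa_mult f (fa_const 1) w = (\<Sum>k\<in>{0..length w}. (if k = length w then f w else 0))"
    unfolding fa_mult_def fa_const_def by (rule sum.cong) auto
  then show "fa_mult f (fa_const 1) w = f w" by simp
qed

lemma fa_distr_l: "fa_mult (fa_add f g) h = fa_add (fa_mult f h) (fa_mult g h)"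
  by (auto simp: fa_mult_def fa_add_def distrib_right sum.distrib)

lemma fa_distr_r: "fa_mult h (fa_add f g) = fa_add (fa_mult h f) (fa_mult h g)"
  by (auto simp: fa_mult_def fa_add_def distrib_left sum.distrib)

lemma fa_mult_closed:
  assumes "f \<in> fa_carrier n" "g \<in> fa_carrier n" shows "fa_mult f g \<in> fa_carrier n"
proof -
  let ?Sf = "{w. f w \<noteq> 0}" and ?Sg = "{w. g w \<noteq> 0}"
  have nz: "\<exists>k. f (take k w) \<noteq> 0 \<and> g (drop k w) \<noteq> 0" if "fa_mult f g w \<noteq> 0" for w
  proof (rule ccontr)
    assume "\<not> ?thesis"
    then have "fa_mult f g w = 0" unfolding fa_mult_def by (intro sum.neutral) auto
    with that show False by simp
  qed
  have "{w. fa_mult f g w \<noteq> 0} \<subseteq> (\<lambda>(u,v). u @ v) ` (?Sf \<times> ?Sg)"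
  proof
    fix w assume "w \<in> {w. fa_mult f g w \<noteq> 0}"
    then obtain k where "f (take k w) \<noteq> 0" "g (drop k w) \<noteq> 0" using nz by blast
    then show "w \<in> (\<lambda>(u,v). u @ v) ` (?Sf \<times> ?Sg)"
      by (intro image_eqI[of _ _ "(take k w, drop k w)"]) auto
  qed
  moreover have "finite ((\<lambda>(u,v). u @ v) ` (?Sf \<times> ?Sg))"
    using assms by (auto simp: fa_carrier_def)
  ultimately have "finite {w. fa_mult f g w \<noteq> 0}" by (rule finite_subset)
  moreover have "set w \<subseteq> {..<n}" if w: "fa_mult f g w \<noteq> 0" for w
  proof -
    obtain k where k: "f (take k w) \<noteq> 0" "g (drop k w) \<noteq> 0" using nz[OF w] by blast
    then have "set (take k w) \<subseteq> {..<n}" "set (drop k w) \<subseteq> {..<n}"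
      using assms by (auto simp: fa_carrier_def)
    then show ?thesis by (metis append_take_drop_id set_append Un_subset_iff)
  qed
  ultimately show ?thesis by (auto simp: fa_carrier_def)
qed

lemma fa_add_closed:
  assumes "f \<in> fa_carrier n" "g \<in> fa_carrier n" shows "fa_add f g \<in> fa_carrier n"
proof -
  have "{w. fa_add f g w \<noteq> 0} \<subseteq> {w. f w \<noteq> 0} \<union> {w. g w \<noteq> 0}" by (auto simp: fa_add_def)
  then show ?thesis using assms unfolding fa_carrier_def
    by (auto simp: fa_add_def intro: finite_subset)
qed

lemma fa_minus_closed:
  assumes "f \<in> fa_carrier n" "g \<in> fa_carrier n" shows "fa_minus f g \<in> fa_carrier n"
proof -
  have "{w. fa_minus f g w \<noteq> 0} \<subseteq> {w. f w \<noteq> 0} \<union> {w. g w \<noteq> 0}" by (auto simp: fa_minus_def)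
  then show ?thesis using assms unfolding fa_carrier_def
    by (auto simp: fa_minus_def intro: finite_subset)
qed

lemma fa_neg_closed:
  assumes "f \<in> fa_carrier n" shows "(\<lambda>w. - f w) \<in> fa_carrier n"
  using assms unfolding fa_carrier_def by auto

lemma fa_const_closed: "fa_const c \<in> fa_carrier n"
proof -
  have "{w. fa_const c w \<noteq> 0} \<subseteq> {[]}" by (auto simp: fa_const_def)
  then show ?thesis unfolding fa_carrier_def by (auto simp: fa_const_def intro: finite_subset)
qed

lemma fa_gen_closed: "i < n \<Longrightarrow> (fa_gen i :: nat list \<Rightarrow> 'r::idom) \<in> fa_carrier n"
proof -
  assume "i < n"
  have "{w. (fa_gen i :: nat list \<Rightarrow> 'r) w \<noteq> 0} \<subseteq> {[i]}" by (auto simp: fa_gen_def)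
  then show ?thesis using \<open>i < n\<close> unfolding fa_carrier_def by (auto simp: fa_gen_def intro: finite_subset)
qed

lemma fa_prod_list_closed:
  "set xs \<subseteq> fa_carrier n \<Longrightarrow> fa_prod_list xs \<in> fa_carrier n"
  by (induction xs) (auto simp: fa_prod_list_def fa_const_closed fa_mult_closed)

lemma FA_ring: "ring (FA n :: (nat list \<Rightarrow> 'r::idom) ring)"
proof (rule ringI)
  show "abelian_group (FA n :: (nat list \<Rightarrow> 'r::idom) ring)"
  proof (rule abelian_groupI, simp_all add: FA_def fa_add_closed)
    show "(\<lambda>_. 0) \<in> fa_carrier n" by (simp add: fa_carrier_def)
    show "\<And>x y z. fa_add (fa_add x y) z = fa_add x (fa_add y z)" by (simp add: fa_add_def add.assoc)
    show "\<And>x y. fa_add x y = fa_add y x" by (simp add: fa_add_def add.commute)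
    show "\<And>x. fa_add (\<lambda>_. 0) x = x" by (simp add: fa_add_def)
    show "\<And>x. x \<in> fa_carrier n \<Longrightarrow> \<exists>y\<in>fa_carrier n. fa_add y x = (\<lambda>_. 0)"
      by (rule bexI[OF _ fa_neg_closed]) (auto simp: fa_add_def)
  qed
  show "monoid (FA n :: (nat list \<Rightarrow> 'r::idom) ring)"
    by (rule monoidI) (simp_all add: FA_def fa_mult_closed fa_const_closed fa_mult_assoc fa_mult_one_l fa_mult_one_r)
qed (simp_all add: FA_def fa_distr_l fa_distr_r)



lemma rels_sub: "AK_rels n r q Q \<subseteq> fa_carrier n"
  unfolding AK_rels_def
  by (auto intro!: fa_prod_list_closed fa_minus_closed fa_mult_closed fa_add_closed
      fa_gen_closed fa_const_closed)

lemma carrier_FA: "carrier (FA n) = fa_carrier n" by (simp add: FA_def)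

lemma AK_ideal: "ideal (Idl\<^bsub>FA n\<^esub> (AK_rels n r q Q)) (FA n)"
  by (rule ring.genideal_ideal[OF FA_ring]) (simp add: carrier_FA rels_sub)

lemma AK_ring: "ring (AK n r q Q)"
  unfolding AK_def by (rule ideal.quotient_is_ring[OF AK_ideal])

lemma AK_coset_in: "a \<in> fa_carrier n \<Longrightarrow>
   (Idl\<^bsub>FA n\<^esub> (AK_rels n r q Q)) +>\<^bsub>FA n\<^esub> a \<in> carrier (AK n r q Q)"
  unfolding AK_def FactRing_def by (auto simp: A_RCOSETS_def' carrier_FA)

lemma AK_T_in: "i < n \<Longrightarrow> AK_T n r q Q i \<in> carrier (AK n r q Q)"
  unfolding AK_T_def by (rule AK_coset_in[OF fa_gen_closed])

lemma AK_sc_in: "AK_sc n r q Q c \<in> carrier (AK n r q Q)"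
  unfolding AK_sc_def by (rule AK_coset_in[OF fa_const_closed])

lemma AK_prod_in: "set xs \<subseteq> carrier (AK n r q Q) \<Longrightarrow> AK_prod n r q Q xs \<in> carrier (AK n r q Q)"
  by (induction xs) (auto simp: AK_prod_def ring.ring_simprules[OF AK_ring])

lemma AK_L_in: "1 \<le> k \<Longrightarrow> k \<le> n \<Longrightarrow> AK_L n r q Q k \<in> carrier (AK n r q Q)"
  unfolding AK_L_def by (rule AK_prod_in) (auto simp: AK_sc_in intro!: AK_T_in)

lemma csize_sum_le:
  assumes "multicomp r n mu" "m \<le> r" shows "(\<Sum>t<m. csize mu t) \<le> n"
proof -
  have "(\<Sum>t<m. csize mu t) \<le> (\<Sum>t<r. csize mu t)"
    using assms(2) by (intro sum_mono2) auto
  then show ?thesis using assms(1) by (simp add: multicomp_def)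
qed

lemma AK_u_in: assumes "multicomp r n mu" shows "AK_u n r q Q mu \<in> carrier (AK n r q Q)"
  unfolding AK_u_def
proof (rule AK_prod_in)
  have "AK_L n r q Q k \<ominus>\<^bsub>AK n r q Q\<^esub> AK_sc n r q Q (Q s) \<in> carrier (AK n r q Q)"
    if s: "2 \<le> s" "s < Suc r" and k: "1 \<le> k" "k < Suc (\<Sum>t<s - 1. csize mu t)" for s k
  proof -
  have "(\<Sum>t<s-1. csize mu t) \<le> n" using csize_sum_le[OF assms, of "s-1"] s by simp
  then have "k \<le> n" using k by simp
  then show "AK_L n r q Q k \<ominus>\<^bsub>AK n r q Q\<^esub> AK_sc n r q Q (Q s) \<in> carrier (AK n r q Q)"
    using k by (intro ring.ring_simprules(4)[OF AK_ring] AK_L_in AK_sc_in) auto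
  qed
  then show "set (concat (map (\<lambda>s. map (\<lambda>k. AK_L n r q Q k \<ominus>\<^bsub>AK n r q Q\<^esub> AK_sc n r q Q (Q s))
         [1..<(\<Sum>t<s - 1. csize mu t) + 1]) [2..<r + 1])) \<subseteq> carrier (AK n r q Q)"
    by auto
qed

lemma perm_of_word_append: "perm_of_word (xs @ ys) = perm_of_word xs \<circ> perm_of_word ys"
  by (induction xs) (auto simp: perm_of_word_def)

lemma perm_of_word_single: "perm_of_word [c] = stp c"
  by (simp add: perm_of_word_def)

lemma stp_transpose: "stp i = transpose i (i+1)"
  by (auto simp: stp_def transpose_def)

lemma transpose_word: "\<exists>ws. set ws \<subseteq> {a..<a+1+d} \<and> perm_of_word ws = transpose a (a+1+d)"
proof (induction d)
  case 0
  show ?case by (rule exI[of _ "[a]"]) (auto simp: perm_of_word_def stp_transpose)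
next
  case (Suc d)
  then obtain ws where ws: "set ws \<subseteq> {a..<a+1+d}" "perm_of_word ws = transpose a (a+1+d)" by blast
  have eq: "transpose a (a+1+Suc d) = stp (a+1+d) \<circ> transpose a (a+1+d) \<circ> stp (a+1+d)"
    by (auto simp: stp_def transpose_def)
  have pw: "perm_of_word ([a+1+d] @ ws @ [a+1+d]) = stp (a+1+d) \<circ> perm_of_word ws \<circ> stp (a+1+d)"
    by (simp only: perm_of_word_append perm_of_word_single comp_assoc)
  show ?case
    by (rule exI[of _ "[a+1+d] @ ws @ [a+1+d]"], subst pw, subst ws(2), subst eq[symmetric])
       (use ws in auto)
qed

lemma perm_word_exists:
  assumes "bij_betw w {1..n} {1..n}" "\<forall>x. x \<notin> {1..n} \<longrightarrow> w x = x"
  shows "\<exists>ws. set ws \<subseteq> {1..<n} \<and> perm_of_word ws = w"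
proof -
  have "w permutes {1..n}" using assms by (intro bij_imp_permutes) auto
  from this finite_atLeastAtMost[of 1 n] show ?thesis
  proof (induction rule: permutes_induct)
    case id
    then show ?case by (rule exI[of _ "[]"]) (simp add: perm_of_word_def)
  next
    case (swap a b p)
    then obtain ws where ws: "set ws \<subseteq> {1..<n}" "perm_of_word ws = p" by blast
    have "\<exists>vs. set vs \<subseteq> {1..<n} \<and> perm_of_word vs = transpose a b"
    proof (cases "a < b")
      case True
      obtain vs where "set vs \<subseteq> {a..<a+1+(b-a-1)}" "perm_of_word vs = transpose a (a+1+(b-a-1))"
        using transpose_word by blast
      then show ?thesis using True swap.hyps by (intro exI[of _ vs]) auto
    next
      case False
      then have "b < a" using swap.hyps by simp
      obtain vs where "set vs \<subseteq> {b..<b+1+(a-b-1)}" "perm_of_word vs = transpose b (b+1+(a-b-1))"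
        using transpose_word by blast
      then show ?thesis using \<open>b < a\<close> swap.hyps by (intro exI[of _ vs]) (auto simp: transpose_commute)
    qed
    then obtain vs where "set vs \<subseteq> {1..<n}" "perm_of_word vs = transpose a b" by blast
    then show ?case using ws by (intro exI[of _ "vs @ ws"]) (simp add: perm_of_word_append)
  qed
qed

lemma reduced_word_exists:
  assumes "bij_betw w {1..n} {1..n}" "\<forall>x. x \<notin> {1..n} \<longrightarrow> w x = x"
  shows "\<exists>ws. reduced_word n w ws"
proof -
  obtain ws0 where "set ws0 \<subseteq> {1..<n} \<and> perm_of_word ws0 = w" using perm_word_exists[OF assms] by blast
  from ex_has_least_nat[of "\<lambda>ws. set ws \<subseteq> {1..<n} \<and> perm_of_word ws = w", OF this, of length]
  show ?thesis unfolding reduced_word_def by blast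
qed

lemma AK_Tw_in:
  assumes "bij_betw w {1..n} {1..n}" "\<forall>x. x \<notin> {1..n} \<longrightarrow> w x = x"
  shows "AK_Tw n r q Q w \<in> carrier (AK n r q Q)"
proof -
  have "reduced_word n w (SOME ws. reduced_word n w ws)"
    using reduced_word_exists[OF assms] by (rule someI_ex)
  then have "set (SOME ws. reduced_word n w ws) \<subseteq> {1..<n}" by (simp add: reduced_word_def)
  then show ?thesis unfolding AK_Tw_def by (intro AK_prod_in) (auto intro!: AK_T_in)
qed

lemma AK_x_in: "AK_x n r q Q mu \<in> carrier (AK n r q Q)"
  unfolding AK_x_def
  by (rule abelian_monoid.finsum_closed[OF abelian_group.axioms(1)[OF ring.is_abelian_group[OF AK_ring]]])
     (auto simp: young_subgroup_def intro!: AK_Tw_in)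

lemma AK_m_in: "multicomp r n mu \<Longrightarrow> AK_m n r q Q mu \<in> carrier (AK n r q Q)"
  unfolding AK_m_def by (intro ring.ring_simprules(5)[OF AK_ring] AK_x_in AK_u_in)



lemma csize_omega: "t + 1 \<noteq> r \<Longrightarrow> csize (omega r n) t = 0"
  by (simp add: csize_def omega_def)

lemma row_block_omega:
  assumes "1 \<le> r" "1 \<le> x" "x \<le> n"
  shows "row_block (omega r n) (r-1) (x-1) = {x}"
proof -
  have c: "(\<Sum>t<r-1. csize (omega r n) t) = 0" using assms by (auto intro!: sum.neutral csize_omega)
  have "(\<Sum>j<x-1. omega r n (r-1) j) = (\<Sum>j<x-1. 1)"
    using assms by (intro sum.cong) (auto simp: omega_def)
  then have j: "(\<Sum>j<x-1. omega r n (r-1) j) = x - 1" by simp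
  have o: "omega r n (r-1) (x-1) = 1" using assms by (simp add: omega_def)
  show ?thesis unfolding row_block_def Let_def c j o using assms by simp
qed

lemma young_omega:
  assumes "1 \<le> r" shows "young_subgroup r n (omega r n) = {id}"
proof
  show "{id} \<subseteq> young_subgroup r n (omega r n)" by (simp add: young_subgroup_def)
  show "young_subgroup r n (omega r n) \<subseteq> {id}"
  proof
    fix w assume w: "w \<in> young_subgroup r n (omega r n)"
    have "w x = x" for x
    proof (cases "x \<in> {1..n}")
      case True
      then have "w ` row_block (omega r n) (r-1) (x-1) = row_block (omega r n) (r-1) (x-1)"
        using w assms by (auto simp: young_subgroup_def)
      then show ?thesis using row_block_omega[OF assms, of x n] True by simp
    next
      case False then show ?thesis using w by (simp add: young_subgroup_def)
    qed
    then show "w \<in> {id}" by auto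
  qed
qed

lemma AK_u_omega: assumes "1 \<le> r" shows "AK_u n r q Q (omega r n) = \<one>\<^bsub>AK n r q Q\<^esub>"
proof -
  have S: "(\<Sum>t<s - 1. csize (omega r n) t) = 0" if "s \<in> set [2..<r + 1]" for s
    using that by (auto intro!: sum.neutral csize_omega)
  have "map (\<lambda>s. map (\<lambda>k. AK_L n r q Q k \<ominus>\<^bsub>AK n r q Q\<^esub> AK_sc n r q Q (Q s))
         [1..<(\<Sum>t<s - 1. csize (omega r n) t) + 1]) [2..<r + 1] = map (\<lambda>s. []) [2..<r + 1]"
  proof (rule map_cong[OF refl])
    fix s assume "s \<in> set [2..<r + 1]"
    note E = S[OF this]
    show "map (\<lambda>k. AK_L n r q Q k \<ominus>\<^bsub>AK n r q Q\<^esub> AK_sc n r q Q (Q s))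
         [1..<(\<Sum>t<s - 1. csize (omega r n) t) + 1] = []" unfolding E by simp
  qed
  then have "concat (map (\<lambda>s. map (\<lambda>k. AK_L n r q Q k \<ominus>\<^bsub>AK n r q Q\<^esub> AK_sc n r q Q (Q s))
         [1..<(\<Sum>t<s - 1. csize (omega r n) t) + 1]) [2..<r + 1]) = []"
    by simp
  note L = this
  show ?thesis unfolding AK_u_def AK_prod_def L by simp
qed

lemma AK_Tw_id: "AK_Tw n r q Q id = \<one>\<^bsub>AK n r q Q\<^esub>"
proof -
  have r0: "reduced_word n id []" by (simp add: reduced_word_def perm_of_word_def)
  then have "reduced_word n id (SOME ws. reduced_word n id ws)" by (rule someI)
  then have "length (SOME ws. reduced_word n id ws) \<le> length ([]::nat list)"
    unfolding reduced_word_def using r0 unfolding reduced_word_def by blast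
  then have "(SOME ws. reduced_word n id ws) = []" by simp
  then show ?thesis unfolding AK_Tw_def by (simp add: AK_prod_def)
qed

lemma AK_m_omega: assumes "1 \<le> r" shows "AK_m n r q Q (omega r n) = \<one>\<^bsub>AK n r q Q\<^esub>"
proof -
  interpret K: ring "AK n r q Q" by (rule AK_ring)
  have "AK_x n r q Q (omega r n) = \<one>\<^bsub>AK n r q Q\<^esub>"
    unfolding AK_x_def young_omega[OF assms]
    using K.finsum_insert[of "{}" id "AK_Tw n r q Q"] by (simp add: AK_Tw_id)
  then show ?thesis unfolding AK_m_def AK_u_omega[OF assms] by simp
qed



context
  fixes n r :: nat and q :: "'r::idom" and Q :: "nat \<Rightarrow> 'r" and Lam om
  assumes mc: "\<forall>mu\<in>Lam. AK_m n r q Q mu \<in> carrier (AK n r q Q)"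
    and omL: "om \<in> Lam" and mom: "AK_m n r q Q om = \<one>\<^bsub>AK n r q Q\<^esub>"
begin

interpretation K: ring "AK n r q Q" by (rule AK_ring)

lemma Mperm_sub: "mu \<in> Lam \<Longrightarrow> x \<in> Mperm n r q Q mu \<Longrightarrow> x \<in> carrier (AK n r q Q)"
  using mc by (auto simp: Mperm_def)

lemma Mperm_zero: "mu \<in> Lam \<Longrightarrow> \<zero>\<^bsub>AK n r q Q\<^esub> \<in> Mperm n r q Q mu"
  using mc unfolding Mperm_def by (intro image_eqI[of _ _ "\<zero>\<^bsub>AK n r q Q\<^esub>"]) auto

lemma Mperm_add: "mu \<in> Lam \<Longrightarrow> x \<in> Mperm n r q Q mu \<Longrightarrow> y \<in> Mperm n r q Q mu \<Longrightarrow>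
   x \<oplus>\<^bsub>AK n r q Q\<^esub> y \<in> Mperm n r q Q mu"
  using mc unfolding Mperm_def by (auto simp: K.r_distr[symmetric])

lemma Mperm_act: "mu \<in> Lam \<Longrightarrow> x \<in> Mperm n r q Q mu \<Longrightarrow> h \<in> carrier (AK n r q Q) \<Longrightarrow>
   x \<otimes>\<^bsub>AK n r q Q\<^esub> h \<in> Mperm n r q Q mu"
  using mc unfolding Mperm_def by (auto simp: K.m_assoc)

lemma Mperm_om: "Mperm n r q Q om = carrier (AK n r q Q)"
  unfolding Mperm_def mom by (auto simp: image_iff)

lemma Msum_D: "x \<in> Msum n r q Q Lam \<Longrightarrow> mu \<in> Lam \<Longrightarrow> x mu \<in> Mperm n r q Q mu"
  by (auto simp: Msum_def)

lemma Msum_D2: "x \<in> Msum n r q Q Lam \<Longrightarrow> mu \<in> Lam \<Longrightarrow> x mu \<in> carrier (AK n r q Q)"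
  using Msum_D Mperm_sub by blast

lemma Msum_ext: "x \<in> Msum n r q Q Lam \<Longrightarrow> mu \<notin> Lam \<Longrightarrow> x mu = undefined"
  by (auto simp: Msum_def)

lemma Msum_I: "(\<And>mu. mu \<in> Lam \<Longrightarrow> f mu \<in> Mperm n r q Q mu) \<Longrightarrow> (\<lambda>mu\<in>Lam. f mu) \<in> Msum n r q Q Lam"
  by (auto simp: Msum_def)

lemma Msum_add_in: "x \<in> Msum n r q Q Lam \<Longrightarrow> y \<in> Msum n r q Q Lam \<Longrightarrow> Msum_add n r q Q Lam x y \<in> Msum n r q Q Lam"
  unfolding Msum_add_def by (intro Msum_I Mperm_add Msum_D)

lemma Msum_act_in: "x \<in> Msum n r q Q Lam \<Longrightarrow> h \<in> carrier (AK n r q Q) \<Longrightarrow> Msum_act n r q Q Lam x h \<in> Msum n r q Q Lam"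
  unfolding Msum_act_def by (intro Msum_I Mperm_act Msum_D)

lemma nat_map_app: "x \<in> Msum n r q Q Lam \<Longrightarrow> nat_map n r q Q Lam h x = Msum_act n r q Q Lam x h"
  by (simp add: nat_map_def)

lemma nat_map_in: "h \<in> carrier (AK n r q Q) \<Longrightarrow> nat_map n r q Q Lam h \<in> End_Schur n r q Q Lam"
proof -
  assume h: "h \<in> carrier (AK n r q Q)"
  show ?thesis unfolding End_Schur_def
  proof (intro CollectI conjI ballI)
    show "nat_map n r q Q Lam h \<in> extensional (Msum n r q Q Lam)" by (simp add: nat_map_def)
    show "nat_map n r q Q Lam h \<in> Msum n r q Q Lam \<rightarrow> Msum n r q Q Lam"
      using h by (auto simp: nat_map_app Msum_act_in)
  next
    fix x y assume x: "x \<in> Msum n r q Q Lam" and y: "y \<in> Msum n r q Q Lam"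
    show "nat_map n r q Q Lam h (Msum_add n r q Q Lam x y) =
          Msum_add n r q Q Lam (nat_map n r q Q Lam h x) (nat_map n r q Q Lam h y)"
    proof -
      have "nat_map n r q Q Lam h (Msum_add n r q Q Lam x y) = Msum_act n r q Q Lam (Msum_add n r q Q Lam x y) h"
        by (rule nat_map_app[OF Msum_add_in[OF x y]])
      note eq = this
      show ?thesis unfolding eq using x y h
        by (auto simp: nat_map_app Msum_add_def Msum_act_def K.l_distr Msum_D2 intro!: restrict_ext)
    qed
  next
    fix phi x assume phi: "phi \<in> Schur n r q Q Lam" and x: "x \<in> Msum n r q Q Lam"
    have px: "phi x \<in> Msum n r q Q Lam" using phi x by (auto simp: Schur_def)
    show "nat_map n r q Q Lam h (phi x) = phi (nat_map n r q Q Lam h x)"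
      using phi x h px by (simp add: nat_map_app Schur_def)
  qed
qed

definition "unitv = (\<lambda>mu\<in>Lam. if mu = om then \<one>\<^bsub>AK n r q Q\<^esub> else \<zero>\<^bsub>AK n r q Q\<^esub>)"

lemma unitv_in: "unitv \<in> Msum n r q Q Lam"
  unfolding unitv_def by (intro Msum_I) (auto simp: Mperm_om Mperm_zero)

lemma nat_map_unitv: "h \<in> carrier (AK n r q Q) \<Longrightarrow> nat_map n r q Q Lam h unitv om = h"
  using unitv_in omL by (simp add: nat_map_app Msum_act_def unitv_def)

lemma proj_in: assumes nu: "nu \<in> Lam"
  shows "(\<lambda>z\<in>Msum n r q Q Lam. \<lambda>mu\<in>Lam. if mu = nu then z nu else \<zero>\<^bsub>AK n r q Q\<^esub>) \<in> Schur n r q Q Lam"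
  unfolding Schur_def
proof (intro CollectI conjI ballI)
  show "(\<lambda>z\<in>Msum n r q Q Lam. \<lambda>mu\<in>Lam. if mu = nu then z nu else \<zero>\<^bsub>AK n r q Q\<^esub>) \<in> Msum n r q Q Lam \<rightarrow> Msum n r q Q Lam"
  proof (rule funcsetI)
    fix z assume z: "z \<in> Msum n r q Q Lam"
    have "(\<lambda>mu\<in>Lam. if mu = nu then z nu else \<zero>\<^bsub>AK n r q Q\<^esub>) \<in> Msum n r q Q Lam"
      by (rule Msum_I) (use z nu in \<open>auto intro: Msum_D Mperm_zero\<close>)
    then show "(\<lambda>z\<in>Msum n r q Q Lam. \<lambda>mu\<in>Lam. if mu = nu then z nu else \<zero>\<^bsub>AK n r q Q\<^esub>) z \<in> Msum n r q Q Lam"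
      using z by simp
  qed
next
  fix x y assume x: "x \<in> Msum n r q Q Lam" and y: "y \<in> Msum n r q Q Lam"
  show "(\<lambda>z\<in>Msum n r q Q Lam. \<lambda>mu\<in>Lam. if mu = nu then z nu else \<zero>\<^bsub>AK n r q Q\<^esub>) (Msum_add n r q Q Lam x y) =
    Msum_add n r q Q Lam ((\<lambda>z\<in>Msum n r q Q Lam. \<lambda>mu\<in>Lam. if mu = nu then z nu else \<zero>\<^bsub>AK n r q Q\<^esub>) x)
     ((\<lambda>z\<in>Msum n r q Q Lam. \<lambda>mu\<in>Lam. if mu = nu then z nu else \<zero>\<^bsub>AK n r q Q\<^esub>) y)"
    unfolding restrict_apply'[OF Msum_add_in[OF x y]] restrict_apply'[OF x] restrict_apply'[OF y]
    using x y nu by (auto simp: Msum_add_def intro!: restrict_ext)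
next
  fix x h assume x: "x \<in> Msum n r q Q Lam" and h: "h \<in> carrier (AK n r q Q)"
  show "(\<lambda>z\<in>Msum n r q Q Lam. \<lambda>mu\<in>Lam. if mu = nu then z nu else \<zero>\<^bsub>AK n r q Q\<^esub>) (Msum_act n r q Q Lam x h) =
    Msum_act n r q Q Lam ((\<lambda>z\<in>Msum n r q Q Lam. \<lambda>mu\<in>Lam. if mu = nu then z nu else \<zero>\<^bsub>AK n r q Q\<^esub>) x) h"
    unfolding restrict_apply'[OF Msum_act_in[OF x h]] restrict_apply'[OF x]
    using x h nu by (auto simp: Msum_act_def intro!: restrict_ext)
qed simp

lemma phi_in: assumes nu: "nu \<in> Lam" and a: "a \<in> Mperm n r q Q nu"
  shows "(\<lambda>z\<in>Msum n r q Q Lam. \<lambda>mu\<in>Lam. if mu = nu then a \<otimes>\<^bsub>AK n r q Q\<^esub> z om else \<zero>\<^bsub>AK n r q Q\<^esub>) \<in> Schur n r q Q Lam"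
  unfolding Schur_def
proof (intro CollectI conjI ballI)
  have ac: "a \<in> carrier (AK n r q Q)" using Mperm_sub nu a by blast
  show "(\<lambda>z\<in>Msum n r q Q Lam. \<lambda>mu\<in>Lam. if mu = nu then a \<otimes>\<^bsub>AK n r q Q\<^esub> z om else \<zero>\<^bsub>AK n r q Q\<^esub>) \<in> Msum n r q Q Lam \<rightarrow> Msum n r q Q Lam"
  proof (rule funcsetI)
    fix z assume z: "z \<in> Msum n r q Q Lam"
    have "(\<lambda>mu\<in>Lam. if mu = nu then a \<otimes>\<^bsub>AK n r q Q\<^esub> z om else \<zero>\<^bsub>AK n r q Q\<^esub>) \<in> Msum n r q Q Lam"
      by (rule Msum_I) (use z nu a omL in \<open>auto intro: Mperm_act Msum_D2 Mperm_zero\<close>)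
    then show "(\<lambda>z\<in>Msum n r q Q Lam. \<lambda>mu\<in>Lam. if mu = nu then a \<otimes>\<^bsub>AK n r q Q\<^esub> z om else \<zero>\<^bsub>AK n r q Q\<^esub>) z \<in> Msum n r q Q Lam"
      using z by simp
  qed
next
  have ac: "a \<in> carrier (AK n r q Q)" using Mperm_sub nu a by blast
  fix x y assume x: "x \<in> Msum n r q Q Lam" and y: "y \<in> Msum n r q Q Lam"
  show "(\<lambda>z\<in>Msum n r q Q Lam. \<lambda>mu\<in>Lam. if mu = nu then a \<otimes>\<^bsub>AK n r q Q\<^esub> z om else \<zero>\<^bsub>AK n r q Q\<^esub>) (Msum_add n r q Q Lam x y) =
    Msum_add n r q Q Lam ((\<lambda>z\<in>Msum n r q Q Lam. \<lambda>mu\<in>Lam. if mu = nu then a \<otimes>\<^bsub>AK n r q Q\<^esub> z om else \<zero>\<^bsub>AK n r q Q\<^esub>) x)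
     ((\<lambda>z\<in>Msum n r q Q Lam. \<lambda>mu\<in>Lam. if mu = nu then a \<otimes>\<^bsub>AK n r q Q\<^esub> z om else \<zero>\<^bsub>AK n r q Q\<^esub>) y)"
    unfolding restrict_apply'[OF Msum_add_in[OF x y]] restrict_apply'[OF x] restrict_apply'[OF y]
    using x y nu ac omL by (auto simp: Msum_add_def K.r_distr Msum_D2 intro!: restrict_ext)
next
  have ac: "a \<in> carrier (AK n r q Q)" using Mperm_sub nu a by blast
  fix x h assume x: "x \<in> Msum n r q Q Lam" and h: "h \<in> carrier (AK n r q Q)"
  show "(\<lambda>z\<in>Msum n r q Q Lam. \<lambda>mu\<in>Lam. if mu = nu then a \<otimes>\<^bsub>AK n r q Q\<^esub> z om else \<zero>\<^bsub>AK n r q Q\<^esub>) (Msum_act n r q Q Lam x h) =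
    Msum_act n r q Q Lam ((\<lambda>z\<in>Msum n r q Q Lam. \<lambda>mu\<in>Lam. if mu = nu then a \<otimes>\<^bsub>AK n r q Q\<^esub> z om else \<zero>\<^bsub>AK n r q Q\<^esub>) x) h"
    unfolding restrict_apply'[OF Msum_act_in[OF x h]] restrict_apply'[OF x]
    using x h nu ac omL by (auto simp: Msum_act_def K.m_assoc Msum_D2 intro!: restrict_ext)
qed simp

lemma surj_part: assumes psi: "psi \<in> End_Schur n r q Q Lam"
  shows "\<exists>h\<in>carrier (AK n r q Q). psi = nat_map n r q Q Lam h"
proof -
  have psiM: "psi z \<in> Msum n r q Q Lam" if "z \<in> Msum n r q Q Lam" for z
    using psi that by (auto simp: End_Schur_def)
  have comm: "psi (phi z) = phi (psi z)" if "phi \<in> Schur n r q Q Lam" "z \<in> Msum n r q Q Lam" for phi z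
    using psi that by (auto simp: End_Schur_def)
  define h where "h = psi unitv om"
  have h: "h \<in> carrier (AK n r q Q)" unfolding h_def using psiM[OF unitv_in] omL Mperm_om Msum_D by blast
  have "psi x = nat_map n r q Q Lam h x" for x
  proof (cases "x \<in> Msum n r q Q Lam")
    case False
    then show ?thesis using psi by (auto simp: End_Schur_def nat_map_def extensional_def)
  next
    case x: True
    show ?thesis
    proof
      fix nu
      show "psi x nu = nat_map n r q Q Lam h x nu"
      proof (cases "nu \<in> Lam")
        case False
        then show ?thesis using x psiM[OF x] by (simp add: nat_map_app Msum_act_def Msum_ext)
      next
        case nu: True
        define pi where "pi = (\<lambda>z\<in>Msum n r q Q Lam. \<lambda>mu\<in>Lam. if mu = nu then z nu else \<zero>\<^bsub>AK n r q Q\<^esub>)"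
        define phi where "phi = (\<lambda>z\<in>Msum n r q Q Lam. \<lambda>mu\<in>Lam. if mu = nu then x nu \<otimes>\<^bsub>AK n r q Q\<^esub> z om else \<zero>\<^bsub>AK n r q Q\<^esub>)"
        have pi: "pi \<in> Schur n r q Q Lam" unfolding pi_def by (rule proj_in[OF nu])
        have phi: "phi \<in> Schur n r q Q Lam" unfolding phi_def by (rule phi_in[OF nu Msum_D[OF x nu]])
        have xc: "x nu \<in> carrier (AK n r q Q)" using Msum_D2[OF x nu] .
        have "psi x nu = pi (psi x) nu" using psiM[OF x] nu by (simp add: pi_def)
        also have "\<dots> = psi (pi x) nu" using comm[OF pi x] by simp
        also have "pi x = phi unitv"
          using x unitv_in xc omL by (auto simp: pi_def phi_def unitv_def K.r_one intro!: restrict_ext)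
        also have "psi (phi unitv) = phi (psi unitv)" using comm[OF phi unitv_in] .
        also have "\<dots> nu = x nu \<otimes>\<^bsub>AK n r q Q\<^esub> h" using psiM[OF unitv_in] nu by (simp add: phi_def h_def)
        also have "\<dots> = nat_map n r q Q Lam h x nu" using x nu by (simp add: nat_map_app Msum_act_def)
        finally show ?thesis .
      qed
    qed
  qed
  then show ?thesis using h by blast
qed

lemma main_abstract:
  "bij_betw (nat_map n r q Q Lam) (carrier (AK n r q Q)) (End_Schur n r q Q Lam)
    \<and> nat_map n r q Q Lam \<one>\<^bsub>AK n r q Q\<^esub> = (\<lambda>x\<in>Msum n r q Q Lam. x)
    \<and> (\<forall>h\<in>carrier (AK n r q Q). \<forall>k\<in>carrier (AK n r q Q).
         nat_map n r q Q Lam (h \<oplus>\<^bsub>AK n r q Q\<^esub> k)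
           = (\<lambda>x\<in>Msum n r q Q Lam. Msum_add n r q Q Lam (nat_map n r q Q Lam h x) (nat_map n r q Q Lam k x))
       \<and> nat_map n r q Q Lam (h \<otimes>\<^bsub>AK n r q Q\<^esub> k)
           = compose (Msum n r q Q Lam) (nat_map n r q Q Lam k) (nat_map n r q Q Lam h))"
proof (intro conjI ballI)
  show "bij_betw (nat_map n r q Q Lam) (carrier (AK n r q Q)) (End_Schur n r q Q Lam)"
  proof (rule bij_betw_imageI)
    show "inj_on (nat_map n r q Q Lam) (carrier (AK n r q Q))"
    proof (rule inj_onI)
      fix h k assume "h \<in> carrier (AK n r q Q)" "k \<in> carrier (AK n r q Q)"
        "nat_map n r q Q Lam h = nat_map n r q Q Lam k"
      then show "h = k" using nat_map_unitv by metis
    qed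
    show "nat_map n r q Q Lam ` carrier (AK n r q Q) = End_Schur n r q Q Lam"
      using nat_map_in surj_part by blast
  qed
  show "nat_map n r q Q Lam \<one>\<^bsub>AK n r q Q\<^esub> = (\<lambda>x\<in>Msum n r q Q Lam. x)"
  proof
    fix x show "nat_map n r q Q Lam \<one>\<^bsub>AK n r q Q\<^esub> x = (\<lambda>x\<in>Msum n r q Q Lam. x) x"
    proof (cases "x \<in> Msum n r q Q Lam")
      case True
      have "Msum_act n r q Q Lam x \<one>\<^bsub>AK n r q Q\<^esub> = x"
      proof
        fix mu show "Msum_act n r q Q Lam x \<one>\<^bsub>AK n r q Q\<^esub> mu = x mu"
          using True by (cases "mu \<in> Lam") (auto simp: Msum_act_def Msum_D2 Msum_ext)
      qed
      then show ?thesis using True by (simp add: nat_map_app)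
    qed (simp add: nat_map_def)
  qed
next
  fix h k assume h: "h \<in> carrier (AK n r q Q)" and k: "k \<in> carrier (AK n r q Q)"
  show "nat_map n r q Q Lam (h \<oplus>\<^bsub>AK n r q Q\<^esub> k)
           = (\<lambda>x\<in>Msum n r q Q Lam. Msum_add n r q Q Lam (nat_map n r q Q Lam h x) (nat_map n r q Q Lam k x))"
  proof
    fix x show "nat_map n r q Q Lam (h \<oplus>\<^bsub>AK n r q Q\<^esub> k) x
           = (\<lambda>x\<in>Msum n r q Q Lam. Msum_add n r q Q Lam (nat_map n r q Q Lam h x) (nat_map n r q Q Lam k x)) x"
      using h k by (cases "x \<in> Msum n r q Q Lam")
        (auto simp: nat_map_def Msum_add_def Msum_act_def K.r_distr Msum_D2 intro!: restrict_ext)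
  qed
  show "nat_map n r q Q Lam (h \<otimes>\<^bsub>AK n r q Q\<^esub> k)
           = compose (Msum n r q Q Lam) (nat_map n r q Q Lam k) (nat_map n r q Q Lam h)"
  proof
    fix x show "nat_map n r q Q Lam (h \<otimes>\<^bsub>AK n r q Q\<^esub> k) x
           = compose (Msum n r q Q Lam) (nat_map n r q Q Lam k) (nat_map n r q Q Lam h) x"
    proof (cases "x \<in> Msum n r q Q Lam")
      case True
      have xh: "Msum_act n r q Q Lam x h \<in> Msum n r q Q Lam" using Msum_act_in[OF True h] .
      show ?thesis unfolding compose_def restrict_apply'[OF True] nat_map_app[OF True] nat_map_app[OF xh]
        using True h k by (auto simp: Msum_act_def K.m_assoc Msum_D2 intro!: restrict_ext)
    qed (simp add: nat_map_def compose_def)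
  qed
qed

end


theorem mainTheorem12:
  fixes q :: "'r::idom" and Q :: "nat \<Rightarrow> 'r" and n r :: nat
    and Lam :: "(nat \<Rightarrow> nat \<Rightarrow> nat) set"
  assumes "q dvd 1" and "1 \<le> r"
    and "finite Lam" and "\<forall>mu\<in>Lam. multicomp r n mu"
    and "omega r n \<in> Lam" and "Lambda_plus r n Lam \<subseteq> Lam"
  shows "bij_betw (nat_map n r q Q Lam) (carrier (AK n r q Q)) (End_Schur n r q Q Lam)
    \<and> nat_map n r q Q Lam \<one>\<^bsub>AK n r q Q\<^esub> = (\<lambda>x\<in>Msum n r q Q Lam. x)
    \<and> (\<forall>h\<in>carrier (AK n r q Q). \<forall>k\<in>carrier (AK n r q Q).
         nat_map n r q Q Lam (h \<oplus>\<^bsub>AK n r q Q\<^esub> k)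
           = (\<lambda>x\<in>Msum n r q Q Lam. Msum_add n r q Q Lam (nat_map n r q Q Lam h x) (nat_map n r q Q Lam k x))
       \<and> nat_map n r q Q Lam (h \<otimes>\<^bsub>AK n r q Q\<^esub> k)
           = compose (Msum n r q Q Lam) (nat_map n r q Q Lam k) (nat_map n r q Q Lam h))"
  using main_abstract[of Lam n r q Q "omega r n"] AK_m_in AK_m_omega assms by blast

end
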